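(* Let $\iota:\emptyset\to\{\bullet\}$. Then, in $\mathrm{Top}$, $\{\iota\}^{rr}$ is the class of subspace embeddings, i.e. injective continuous maps $A\to B$ such that the topology on $A$ is induced from $B$.
   Context: For continuous maps $f:A\to B$, $g:C\to D$, $f\pitchfork g$ means: for all continuous $t:A\to C$, $b:B\to D$ with $g\circ t=b\circ f$ there is continuous $d:B\to C$ with $d\circ f=t$, $g\circ d=b$. For a class $P$, $P^r=\{g: f\pitchfork g\ \forall f\in P\}$, and $P^{rr}=(P^r)^r$. *)

theory Defs
  imports "HOL-Analysis.Analysis"
begin

text \<open>Lifting property f \<pitchfork> g for continuous maps f : A \<rightarrow> B, g : C \<rightarrow> D
  (maps represented on the carriers topspace; compositions compared on carriers).\<close>
definition lifting_prop ::
  "'a topology \<Rightarrow> 'b topology \<Rightarrow> ('a \<Rightarrow> 'b) \<Rightarrow> 'c topology \<Rightarrow> 'd topology \<Rightarrow> ('c \<Rightarrow> 'd) \<Rightarrow> bool" where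
  "lifting_prop A B f C D g \<longleftrightarrow>
     (\<forall>t b. continuous_map A C t \<and> continuous_map B D b \<and>
            (\<forall>x\<in>topspace A. g (t x) = b (f x)) \<longrightarrow>
       (\<exists>d. continuous_map B C d \<and> (\<forall>x\<in>topspace A. d (f x) = t x) \<and>
            (\<forall>y\<in>topspace B. g (d y) = b y)))"

definition iota_dom :: "unit topology" where "iota_dom = trivial_topology"
definition iota_cod :: "unit topology" where "iota_cod = discrete_topology {()}"
definition iota :: "unit \<Rightarrow> unit" where "iota = (\<lambda>x. x)"

definition in_iota_r :: "'c topology \<Rightarrow> 'd topology \<Rightarrow> ('c \<Rightarrow> 'd) \<Rightarrow> bool" where
  "in_iota_r C D g \<longleftrightarrow> continuous_map C D g \<and> lifting_prop iota_dom iota_cod iota C D g"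

text \<open>Membership of h : X \<rightarrow> Y in {\<iota>}^{rr}, where the class {\<iota>}^r is
  restricted to maps whose domain/codomain live in the types 'a / 'b.\<close>
definition in_iota_rr ::
  "'a itself \<Rightarrow> 'b itself \<Rightarrow> 'c topology \<Rightarrow> 'd topology \<Rightarrow> ('c \<Rightarrow> 'd) \<Rightarrow> bool" where
  "in_iota_rr _ _ X Y h \<longleftrightarrow> continuous_map X Y h \<and>
     (\<forall>(A::'a topology) (B::'b topology) f. in_iota_r A B f \<longrightarrow> lifting_prop A B f X Y h)"

end

theory Submission
  imports Defs
begin

lemma iota_top: "topspace iota_dom = {}" "topspace iota_cod = {()}"
  by (auto simp: iota_dom_def iota_cod_def)

lemma cm_dom: "continuous_map iota_dom A t"
  by (simp add: iota_dom_def)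

lemma in_iota_r_surj:
  assumes "in_iota_r A B f" "y \<in> topspace B"
  shows "\<exists>x\<in>topspace A. f x = y"
proof -
  have "lifting_prop iota_dom iota_cod iota A B f" using assms(1) by (simp add: in_iota_r_def)
  moreover have "continuous_map iota_cod B (\<lambda>_. y)" using assms(2) by simp
  ultimately have "\<exists>d. continuous_map iota_cod A d \<and> (\<forall>x\<in>topspace iota_dom. d (iota x) = undefined) \<and>
            (\<forall>z\<in>topspace iota_cod. f (d z) = y)"
    unfolding lifting_prop_def using cm_dom[of A "\<lambda>_. undefined"] iota_top(1)
    by (metis empty_iff)
  then obtain d where d: "continuous_map iota_cod A d" "\<forall>z\<in>topspace iota_cod. f (d z) = y"
    by blast
  have "d () \<in> topspace A" using d(1) iota_top by (metis continuous_map_def insertI1 Pi_iff)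
  then show ?thesis using d(2) iota_top by auto
qed

lemma part1:
  assumes emb: "embedding_map X Y h"
  shows "in_iota_rr TYPE('a) TYPE('b) X Y h"
proof -
  obtain g where g: "homeomorphic_maps X (subtopology Y (h ` topspace X)) h g"
    using emb unfolding embedding_map_def homeomorphic_map_maps by blast
  have hc: "continuous_map X Y h" using g
    by (auto simp: homeomorphic_maps_def continuous_map_in_subtopology)
  have gc: "continuous_map (subtopology Y (h ` topspace X)) X g"
    and gh: "\<And>x. x \<in> topspace X \<Longrightarrow> g (h x) = x"
    using g by (auto simp: homeomorphic_maps_def)
  have "lifting_prop A B f X Y h" if r: "in_iota_r A B f"
    for A :: "'a topology" and B :: "'b topology" and f
  proof (unfold lifting_prop_def, intro allI impI)
    fix t b
    assume H: "continuous_map A X t \<and> continuous_map B Y b \<and> (\<forall>x\<in>topspace A. h (t x) = b (f x))"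
    have fc: "continuous_map A B f" using r by (simp add: in_iota_r_def)
    have bimg: "b y \<in> h ` topspace X" if yB: "y \<in> topspace B" for y
    proof -
      obtain x where "x \<in> topspace A" "f x = y" using in_iota_r_surj[OF r yB] by blast
      then show ?thesis using H by (metis continuous_map_def Pi_iff image_eqI)
    qed
    have bc: "continuous_map B (subtopology Y (h ` topspace X)) b"
      using H bimg by (auto simp: continuous_map_in_subtopology)
    show "\<exists>d. continuous_map B X d \<and> (\<forall>x\<in>topspace A. d (f x) = t x) \<and> (\<forall>y\<in>topspace B. h (d y) = b y)"
    proof (intro exI conjI ballI)
      show "continuous_map B X (g \<circ> b)" using continuous_map_compose[OF bc gc] .
    next
      fix x assume x: "x \<in> topspace A"
      have "t x \<in> topspace X" using H x by (metis continuous_map_def Pi_iff)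
      then show "(g \<circ> b) (f x) = t x" using H x gh by (metis comp_apply)
    next
      fix y assume y: "y \<in> topspace B"
      then obtain x where "x \<in> topspace X" "b y = h x" using bimg by blast
      then show "h ((g \<circ> b) y) = b y" using gh by simp
    qed
  qed
  then show ?thesis using hc by (simp add: in_iota_rr_def)
qed

lemma part2:
  fixes X :: "'c topology" and Y :: "'d topology"
  assumes rr: "in_iota_rr TYPE('c) TYPE('d) X Y h"
  shows "embedding_map X Y h"
proof -
  let ?S = "subtopology Y (h ` topspace X)"
  have hc: "continuous_map X Y h" using rr by (simp add: in_iota_rr_def)
  have hS: "continuous_map X ?S h" using hc by (simp add: continuous_map_in_subtopology)
  have "lifting_prop iota_dom iota_cod iota X ?S h"
    unfolding lifting_prop_def
  proof (intro allI impI)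
    fix t b
    assume H: "continuous_map iota_dom X t \<and> continuous_map iota_cod ?S b \<and>
        (\<forall>x\<in>topspace iota_dom. h (t x) = b (iota x))"
    have "() \<in> topspace iota_cod" using iota_top by simp
    moreover have "continuous_map iota_cod ?S b" using H by blast
    ultimately have "b () \<in> topspace ?S"
      using continuous_map_image_subset_topspace by blast
    then obtain x where x: "x \<in> topspace X" "h x = b ()" by auto
    show "\<exists>d. continuous_map iota_cod X d \<and> (\<forall>x\<in>topspace iota_dom. d (iota x) = t x) \<and>
         (\<forall>y\<in>topspace iota_cod. h (d y) = b y)"
      by (rule exI[of _ "\<lambda>_. x"]) (use x in \<open>auto simp: iota_dom_def iota_cod_def\<close>)
  qed
  then have "in_iota_r X ?S h" using hS by (simp add: in_iota_r_def)
  then have lp: "lifting_prop X ?S h X Y h" using rr by (simp add: in_iota_rr_def)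
  have "continuous_map X X id" by simp
  moreover have "continuous_map ?S Y id" by (simp add: continuous_map_from_subtopology)
  ultimately obtain d where d: "continuous_map ?S X d" "\<forall>x\<in>topspace X. d (h x) = x"
     "\<forall>y\<in>topspace ?S. h (d y) = y"
  proof -
    assume a: "continuous_map X X id" "continuous_map ?S Y id"
    have "\<forall>x\<in>topspace X. h (id x) = id (h x)" by simp
    with a lp have "\<exists>d. continuous_map ?S X d \<and> (\<forall>x\<in>topspace X. d (h x) = id x) \<and>
            (\<forall>y\<in>topspace ?S. h (d y) = id y)" unfolding lifting_prop_def by blast
    then show ?thesis using that by auto
  qed
  have "homeomorphic_maps X ?S h d"
    using hS d by (auto simp: homeomorphic_maps_def)
  then show ?thesis unfolding embedding_map_def homeomorphic_map_maps by blast
qed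

theorem mainTheorem9:
  fixes X :: "'c topology" and Y :: "'d topology" and h :: "'c \<Rightarrow> 'd"
  shows "(embedding_map X Y h \<longrightarrow> in_iota_rr TYPE('a) TYPE('b) X Y h)
       \<and> (in_iota_rr TYPE('c) TYPE('d) X Y h \<longrightarrow> embedding_map X Y h)"
  using part1 part2 by blast

end
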